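(* Let $P$ be a finite graded poset with $\hat0$ and let $\lambda$ be an ER-labeling of $P$ satisfying the rank two switching property and such that in each interval of $P$ distinct ascent-free maximal chains have distinct words of labels. Then $\lambda$ satisfies the rank two switching property, the braid relation and the cancellative property.
   Context: An E-labeling is a map $\lambda$ from the cover relations of $P$ to a poset $\Lambda$. The word of labels of a saturated chain $x_0\lessdot\cdots\lessdot x_\ell$ is $\lambda(x_0\lessdot x_1)\cdots\lambda(x_{\ell-1}\lessdot x_\ell)$; the chain is increasing if the word is strictly increasing, ascent-free if no $i$ has $\lambda(x_{i-1}\lessdot x_i)<\lambda(x_i\lessdot x_{i+1})$. ER-labeling: every closed interval has exactly one increasing maximal chain. Rank two switching property: for every saturated chain $\hat0=x_0\lessdot\cdots\lessdot x_k$ and every $i$ with $\lambda(x_{i-1}\lessdot x_i)<\lambda(x_i\lessdot x_{i+1})$ there is a unique $x_i'$ with $x_{i-1}\lessdot x_i'\lessdot x_{i+1}$, $\lambda(x_{i-1}\lessdot x_i')=\lambda(x_i\lessdot x_{i+1})$, $\lambda(x_i'\lessdot x_{i+1})=\lambda(x_{i-1}\lessdot x_i)$. Quadratic exchange: for a maximal chain $\mathbf c$ of an interval with an ascent at position $i$, $U_i(\mathbf c)$ replaces $x_i$ by $x_i'$; otherwise $U_i(\mathbf c)=\mathbf c$. For maximal chains of an interval, $\mathbf c_1\sim_\lambda\mathbf c_2$ means they are connected by a sequence of quadratic exchanges (forwards or backwards) within that interval. Braid relation: whenever a maximal chain $\mathbf c$ of an interval has strictly increasing labels at three consecutive positions $i,i+1,i+2$,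 $U_iU_{i+1}U_i(\mathbf c)=U_{i+1}U_iU_{i+1}(\mathbf c)$. Cancellative property: for all $z<x<y$, every maximal chain $\mathbf c$ of $[z,x]$ and maximal chains $\mathbf c_1,\mathbf c_2$ of $[x,y]$, $\mathbf c\cup\mathbf c_1\sim_\lambda\mathbf c\cup\mathbf c_2$ implies $\mathbf c_1\sim_\lambda\mathbf c_2$. *)

theory Defs
  imports Main
begin

text \<open>An edge labeling is a function
  lam :: 'a => 'a => 'l into a poset 'l; only its values on cover
  relations matter.\<close>

definition covers :: "'a::order set \<Rightarrow> 'a \<Rightarrow> 'a \<Rightarrow> bool" where
  "covers P x y \<longleftrightarrow> x \<in> P \<and> y \<in> P \<and> x < y \<and> \<not> (\<exists>z\<in>P. x < z \<and> z < y)"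

definition is_bottom :: "'a::order set \<Rightarrow> 'a \<Rightarrow> bool" where
  "is_bottom P z \<longleftrightarrow> z \<in> P \<and> (\<forall>x\<in>P. z \<le> x)"

definition graded :: "'a::order set \<Rightarrow> bool" where
  "graded P \<longleftrightarrow> (\<exists>\<rho>::'a \<Rightarrow> nat. \<forall>x y. covers P x y \<longrightarrow> \<rho> y = \<rho> x + 1)"

definition saturated :: "'a::order set \<Rightarrow> 'a list \<Rightarrow> bool" where
  "saturated P c \<longleftrightarrow> c \<noteq> [] \<and> (\<forall>i. Suc i < length c \<longrightarrow> covers P (c ! i) (c ! Suc i))"

definition maxchain :: "'a::order set \<Rightarrow> 'a \<Rightarrow> 'a \<Rightarrow> 'a list \<Rightarrow> bool" where
  "maxchain P x y c \<longleftrightarrow> saturated P c \<and> hd c = x \<and> last c = y"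

definition word :: "('a \<Rightarrow> 'a \<Rightarrow> 'l) \<Rightarrow> 'a list \<Rightarrow> 'l list" where
  "word lam c = map (\<lambda>(a, b). lam a b) (zip c (tl c))"

definition increasing :: "('a \<Rightarrow> 'a \<Rightarrow> 'l::order) \<Rightarrow> 'a list \<Rightarrow> bool" where
  "increasing lam c \<longleftrightarrow> sorted_wrt (<) (word lam c)"

definition ascent_at :: "('a \<Rightarrow> 'a \<Rightarrow> 'l::order) \<Rightarrow> 'a list \<Rightarrow> nat \<Rightarrow> bool" where
  "ascent_at lam c i \<longleftrightarrow> 1 \<le> i \<and> i + 1 < length c \<and>
     lam (c ! (i - 1)) (c ! i) < lam (c ! i) (c ! (i + 1))"

definition ascent_free :: "('a \<Rightarrow> 'a \<Rightarrow> 'l::order) \<Rightarrow> 'a list \<Rightarrow> bool" where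
  "ascent_free lam c \<longleftrightarrow> (\<forall>i. \<not> ascent_at lam c i)"

definition ER_labeling :: "'a::order set \<Rightarrow> ('a \<Rightarrow> 'a \<Rightarrow> 'l::order) \<Rightarrow> bool" where
  "ER_labeling P lam \<longleftrightarrow>
     (\<forall>x\<in>P. \<forall>y\<in>P. x \<le> y \<longrightarrow> (\<exists>!c. maxchain P x y c \<and> increasing lam c))"

definition switch_cond :: "'a::order set \<Rightarrow> ('a \<Rightarrow> 'a \<Rightarrow> 'l::order) \<Rightarrow> 'a list \<Rightarrow> nat \<Rightarrow> 'a \<Rightarrow> bool" where
  "switch_cond P lam c i x' \<longleftrightarrow>
     covers P (c ! (i - 1)) x' \<and> covers P x' (c ! (i + 1)) \<and>
     lam (c ! (i - 1)) x' = lam (c ! i) (c ! (i + 1)) \<and>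
     lam x' (c ! (i + 1)) = lam (c ! (i - 1)) (c ! i)"

definition rank_two_switching :: "'a::order set \<Rightarrow> 'a \<Rightarrow> ('a \<Rightarrow> 'a \<Rightarrow> 'l::order) \<Rightarrow> bool" where
  "rank_two_switching P z lam \<longleftrightarrow>
     (\<forall>c i. saturated P c \<and> hd c = z \<and> ascent_at lam c i \<longrightarrow> (\<exists>!x'. switch_cond P lam c i x'))"

definition U :: "'a::order set \<Rightarrow> ('a \<Rightarrow> 'a \<Rightarrow> 'l::order) \<Rightarrow> nat \<Rightarrow> 'a list \<Rightarrow> 'a list" where
  "U P lam i c = (if ascent_at lam c i then c[i := (THE x'. switch_cond P lam c i x')] else c)"

definition qstep :: "'a::order set \<Rightarrow> ('a \<Rightarrow> 'a \<Rightarrow> 'l::order) \<Rightarrow> 'a \<Rightarrow> 'a \<Rightarrow> 'a list \<Rightarrow> 'a list \<Rightarrow> bool" where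
  "qstep P lam x y c d \<longleftrightarrow> maxchain P x y c \<and> maxchain P x y d \<and> (\<exists>i. d = U P lam i c)"

definition qequiv :: "'a::order set \<Rightarrow> ('a \<Rightarrow> 'a \<Rightarrow> 'l::order) \<Rightarrow> 'a \<Rightarrow> 'a \<Rightarrow> 'a list \<Rightarrow> 'a list \<Rightarrow> bool" where
  "qequiv P lam x y c1 c2 \<longleftrightarrow> maxchain P x y c1 \<and> maxchain P x y c2 \<and>
     (symclp (qstep P lam x y))\<^sup>*\<^sup>* c1 c2"

definition braid_relation :: "'a::order set \<Rightarrow> ('a \<Rightarrow> 'a \<Rightarrow> 'l::order) \<Rightarrow> bool" where
  "braid_relation P lam \<longleftrightarrow>
     (\<forall>x y c i. maxchain P x y c \<and> 1 \<le> i \<and> i + 3 \<le> length c \<and>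
        lam (c ! (i - 1)) (c ! i) < lam (c ! i) (c ! (i + 1)) \<and>
        lam (c ! i) (c ! (i + 1)) < lam (c ! (i + 1)) (c ! (i + 2)) \<longrightarrow>
        U P lam i (U P lam (i + 1) (U P lam i c)) =
        U P lam (i + 1) (U P lam i (U P lam (i + 1) c)))"

text \<open>Cancellative property; the union of a maximal chain c of [z,x] with a
  maximal chain d of [x,y] is the concatenation c @ tl d.\<close>
definition cancellative :: "'a::order set \<Rightarrow> ('a \<Rightarrow> 'a \<Rightarrow> 'l::order) \<Rightarrow> bool" where
  "cancellative P lam \<longleftrightarrow>
     (\<forall>z\<in>P. \<forall>x\<in>P. \<forall>y\<in>P. \<forall>c c1 c2. z < x \<and> x < y \<and>
        maxchain P z x c \<and> maxchain P x y c1 \<and> maxchain P x y c2 \<and>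
        qequiv P lam z y (c @ tl c1) (c @ tl c2) \<longrightarrow> qequiv P lam x y c1 c2)"

end

theory Submission
  imports Defs
begin


definition swf :: "'l::order list \<Rightarrow> 'l list \<Rightarrow> bool" where
 "swf u v \<longleftrightarrow> (\<exists>p x y q. u = p @ x # y # q \<and> v = p @ y # x # q \<and> x < y)"

definition sw :: "'l::order list \<Rightarrow> 'l list \<Rightarrow> bool" where
 "sw u v \<longleftrightarrow> swf u v \<or> swf v u"

lemma sw_sym: "sw u v \<Longrightarrow> sw v u" by (auto simp: sw_def)

lemma weq_sym: "sw\<^sup>*\<^sup>* u v \<Longrightarrow> sw\<^sup>*\<^sup>* v u"
proof (induction rule: rtranclp_induct)
  case base then show ?case by simp
next
  case (step b c) then show ?case
    by (meson converse_rtranclp_into_rtranclp sw_sym)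
qed

lemma sw_cases:
  assumes "sw u v"
  obtains p x y q where "u = p @ x # y # q" "v = p @ y # x # q" "x < y \<or> y < x"
  using assms unfolding sw_def swf_def by blast

lemma sw_length: "sw u v \<Longrightarrow> length u = length v"
  by (erule sw_cases) simp

lemma sw_set: "sw u v \<Longrightarrow> set u = set v"
  by (erule sw_cases) auto

lemma weq_length: "sw\<^sup>*\<^sup>* u v \<Longrightarrow> length u = length v"
  by (induction rule: rtranclp_induct) (auto dest: sw_length)

lemma weq_set: "sw\<^sup>*\<^sup>* u v \<Longrightarrow> set u = set v"
  by (induction rule: rtranclp_induct) (auto dest: sw_set)

lemma sw_remove1: "sw u v \<Longrightarrow> sw (remove1 a u) (remove1 a v) \<or> remove1 a u = remove1 a v"
proof (erule sw_cases)
  fix p x y q assume u: "u = p @ x # y # q" and v: "v = p @ y # x # q" and xy: "x < y \<or> y < x"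
  show ?thesis
  proof (cases "a \<in> set p")
    case True
    then show ?thesis using u v xy by (auto simp: remove1_append sw_def swf_def)
  next
    case False
    have "x \<noteq> y" using xy by auto
    then show ?thesis using False u v xy
      apply (simp add: remove1_append sw_def swf_def)
      apply (cases "x = a"; cases "y = a")
      by auto
  qed
qed

lemma weq_remove1: "sw\<^sup>*\<^sup>* u v \<Longrightarrow> sw\<^sup>*\<^sup>* (remove1 a u) (remove1 a v)"
proof (induction rule: rtranclp_induct)
  case base then show ?case by simp
next
  case (step b c) then show ?case
    using sw_remove1[of b c a] by (metis rtranclp.rtrancl_into_rtrancl)
qed

lemma weq_cancel: "sw\<^sup>*\<^sup>* (p @ u) (p @ v) \<Longrightarrow> sw\<^sup>*\<^sup>* u v"
proof (induction p)
  case Nil then show ?case by simp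
next
  case (Cons a p)
  from weq_remove1[OF Cons.prems, of a] show ?case using Cons.IH by simp
qed

lemma G_swap:
  assumes xy: "x < y \<or> y < x" and a: "a \<in> set (p @ x # y # q)"
    and G: "\<forall>w\<in>set (takeWhile (\<lambda>t. t \<noteq> a) (p @ x # y # q)). w < a \<or> a < w"
  shows "\<forall>w\<in>set (takeWhile (\<lambda>t. t \<noteq> a) (p @ y # x # q)). w < a \<or> a < w"
proof (cases "a \<in> set p")
  case True
  then show ?thesis using G by auto
next
  case False
  then have e1: "takeWhile (\<lambda>t. t \<noteq> a) (p @ r) = p @ takeWhile (\<lambda>t. t \<noteq> a) r" for r
    by (intro takeWhile_append2) auto
  show ?thesis using G xy unfolding e1 by (cases "x = a"; cases "y = a") auto
qed

lemma sw_G: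
  assumes "sw u v" "a \<in> set u" "\<forall>w\<in>set (takeWhile (\<lambda>t. t \<noteq> a) u). w < a \<or> a < w"
  shows "\<forall>w\<in>set (takeWhile (\<lambda>t. t \<noteq> a) v). w < a \<or> a < w"
  using assms(1)
proof (rule sw_cases)
  fix p x y q assume u: "u = p @ x # y # q" and v: "v = p @ y # x # q" and xy: "x < y \<or> y < x"
  show ?thesis using G_swap[OF xy, of a p q] assms(2,3) u v by simp
qed

lemma weq_G:
  assumes "sw\<^sup>*\<^sup>* (a # u) v"
  shows "a \<in> set v \<and> (\<forall>w\<in>set (takeWhile (\<lambda>t. t \<noteq> a) v). w < a \<or> a < w)"
  using assms
proof (induction rule: rtranclp_induct)
  case base then show ?case by simp
next
  case (step b c) then show ?case using sw_G sw_set by metis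
qed

fun af :: "'l::order list \<Rightarrow> bool" where
  "af (x # y # w) = (\<not> x < y \<and> af (y # w))" | "af _ = True"

lemma af_tl: "af (x # w) \<Longrightarrow> af w"
  by (cases w) auto

lemma af_app: "af (p @ q) \<Longrightarrow> af q"
  by (induction p) (auto dest: af_tl)

lemma af_iff: "af w \<longleftrightarrow> (\<forall>j. Suc j < length w \<longrightarrow> \<not> w ! j < w ! Suc j)"
proof (induction w rule: af.induct)
  case (1 x y w)
  show ?case
  proof
    assume "af (x # y # w)"
    then show "\<forall>j. Suc j < length (x # y # w) \<longrightarrow> \<not> (x # y # w) ! j < (x # y # w) ! Suc j"
      using 1 by (auto simp: nth_Cons split: nat.splits)
  next
    assume h: "\<forall>j. Suc j < length (x # y # w) \<longrightarrow> \<not> (x # y # w) ! j < (x # y # w) ! Suc j"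
    have "\<not> x < y" using h[rule_format, of 0] by simp
    moreover have "af (y # w)" unfolding 1
    proof (intro allI impI)
      fix j assume "Suc j < length (y # w)"
      then show "\<not> (y # w) ! j < (y # w) ! Suc j" using h[rule_format, of "Suc j"] by simp
    qed
    ultimately show "af (x # y # w)" by simp
  qed
qed auto

lemma af_above:
  "af (p @ b # r) \<Longrightarrow> b = a \<or> a < b \<Longrightarrow> \<forall>y\<in>set p. y < a \<or> a < y \<Longrightarrow> \<forall>y\<in>set p. a < y"
proof (induction p arbitrary: b r rule: rev_induct)
  case Nil then show ?case by simp
next
  case (snoc y p)
  have "af (y # b # r)" using snoc.prems(1) af_app[of p "y # b # r"] by simp
  then have nyb: "\<not> y < b" by simp
  have ay: "a < y"
  proof -
    have "y < a \<or> a < y" using snoc.prems(3) by simp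
    moreover have "\<not> y < a" using nyb snoc.prems(2) by (auto dest: less_trans)
    ultimately show ?thesis by blast
  qed
  have "\<forall>y\<in>set p. a < y"
    using snoc.IH[of y "b # r"] snoc.prems ay by simp
  then show ?case using ay by simp
qed

lemma nf_unique: "sw\<^sup>*\<^sup>* u v \<Longrightarrow> af u \<Longrightarrow> af v \<Longrightarrow> u = v"
proof (induction u arbitrary: v)
  case Nil then show ?case using weq_length by fastforce
next
  case (Cons a u)
  from weq_G[OF Cons.prems(1)] have av: "a \<in> set v"
    and G: "\<forall>w\<in>set (takeWhile (\<lambda>t. t \<noteq> a) v). w < a \<or> a < w" by auto
  define p where "p = takeWhile (\<lambda>t. t \<noteq> a) v"
  have "dropWhile (\<lambda>t. t \<noteq> a) v \<noteq> []" using av by (simp add: dropWhile_eq_Nil_conv)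
  then obtain q where dq: "dropWhile (\<lambda>t. t \<noteq> a) v = a # q"
    by (metis (mono_tags, lifting) hd_dropWhile list.collapse)
  have v: "v = p @ a # q" unfolding p_def using dq takeWhile_dropWhile_id by metis
  have "p = []"
  proof (rule ccontr)
    assume "p \<noteq> []"
    then obtain b p' where pb: "p = b # p'" by (cases p) auto
    have "af (p @ a # q)" using Cons.prems(3) v by simp
    then have "\<forall>y\<in>set p. a < y" using af_above[of p a q a] G unfolding p_def[symmetric] by blast
    then have ab: "a < b" using pb by simp
    have vb: "v = b # (p' @ a # q)" using v pb by simp
    have "sw\<^sup>*\<^sup>* v (a # u)" using weq_sym Cons.prems(1) by blast
    from weq_G[of b "p' @ a # q" "a # u"] this vb
    have bu: "b \<in> set (a # u)"
      and G2: "\<forall>w\<in>set (takeWhile (\<lambda>t. t \<noteq> b) (a # u)). w < b \<or> b < w" by auto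
    define p2 where "p2 = takeWhile (\<lambda>t. t \<noteq> b) (a # u)"
    have "dropWhile (\<lambda>t. t \<noteq> b) (a # u) \<noteq> []" using bu by (auto simp add: dropWhile_eq_Nil_conv)
    then obtain q2 where dq2: "dropWhile (\<lambda>t. t \<noteq> b) (a # u) = b # q2"
      by (metis (mono_tags, lifting) hd_dropWhile list.collapse)
    have u2: "a # u = p2 @ b # q2" unfolding p2_def using dq2 takeWhile_dropWhile_id by metis
    have "af (p2 @ b # q2)" using Cons.prems(2) u2 by simp
    then have "\<forall>y\<in>set p2. b < y" using af_above[of p2 b q2 b] G2 unfolding p2_def[symmetric] by blast
    moreover have "a \<in> set p2" using ab unfolding p2_def by auto
    ultimately have "b < a" by blast
    with ab show False by simp
  qed
  then have v2: "v = a # q" using v by simp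
  have "sw\<^sup>*\<^sup>* u q" using weq_cancel[of "[a]" u q] Cons.prems(1) v2 by simp
  moreover have "af u" using Cons.prems(2) by (rule af_tl)
  moreover have "af q" using Cons.prems(3) v2 af_tl by blast
  ultimately show ?case using Cons.IH v2 by simp
qed

fun wm :: "('l \<Rightarrow> nat) \<Rightarrow> 'l list \<Rightarrow> nat" where
  "wm h [] = 0" | "wm h (a # w) = sum_list (map h w) + wm h w"

lemma wm_swap: "h x < h y \<Longrightarrow> wm h (p @ y # x # q) < wm h (p @ x # y # q)"
  by (induction p) auto

definition hL :: "'l::order set \<Rightarrow> 'l \<Rightarrow> nat" where
  "hL L l = card {m \<in> L. m < l}"

lemma hL_mono: "finite L \<Longrightarrow> a \<in> L \<Longrightarrow> a < b \<Longrightarrow> hL L a < hL L b"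
  unfolding hL_def
  by (rule psubset_card_mono) (auto dest: less_trans)

lemma swf_wm: "swf u v \<Longrightarrow> set u \<subseteq> L \<Longrightarrow> finite L \<Longrightarrow> wm (hL L) v < wm (hL L) u"
  unfolding swf_def using hL_mono wm_swap by fastforce



lemma word_length[simp]: "length (word lam c) = length c - 1"
  by (simp add: word_def)

lemma word_nth: "Suc j < length c \<Longrightarrow> word lam c ! j = lam (c ! j) (c ! Suc j)"
  by (simp add: word_def nth_tl)

lemma word_simps[simp]: "word lam [] = []" "word lam [a] = []"
  "word lam (a # b # r) = lam a b # word lam (b # r)"
  by (simp_all add: word_def)

lemma word_append: "c \<noteq> [] \<Longrightarrow> last c = hd d \<Longrightarrow> d \<noteq> [] \<Longrightarrow> word lam (c @ tl d) = word lam c @ word lam d"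
proof (induction c rule: induct_list012)
  case 1 then show ?case by simp
next
  case (2 a) then show ?case by (cases d) auto
next
  case (3 a b r) then show ?case by simp
qed

lemma sat_cov: "saturated P c \<Longrightarrow> Suc i < length c \<Longrightarrow> covers P (c!i) (c!Suc i)"
  by (simp add: saturated_def)

lemma sat_in: "saturated P c \<Longrightarrow> Suc j < length c \<Longrightarrow> c ! j \<in> P \<and> c ! Suc j \<in> P"
  using sat_cov covers_def by metis

lemma sat_hd_le: "saturated P c \<Longrightarrow> j < length c \<Longrightarrow> hd c \<le> c ! j"
proof (induction j)
  case 0 then show ?case by (simp add: hd_conv_nth saturated_def)
next
  case (Suc j)
  then have "c ! j < c ! Suc j" using sat_cov covers_def by metis
  then show ?case using Suc by auto
qed

lemma maxchain_le: "maxchain P x y c \<Longrightarrow> x \<le> y"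
proof -
  assume m: "maxchain P x y c"
  then have s: "saturated P c" and ne: "c \<noteq> []" and h: "hd c = x" and l: "last c = y"
    by (auto simp: maxchain_def saturated_def)
  have "last c = c ! (length c - 1)" using ne by (simp add: last_conv_nth)
  moreover have "hd c \<le> c ! (length c - 1)" using sat_hd_le[OF s, of "length c - 1"] ne by simp
  ultimately show ?thesis using h l by simp
qed

lemma word_set: "saturated P c \<Longrightarrow> set (word lam c) \<subseteq> (\<lambda>(a, b). lam a b) ` (P \<times> P)"
proof
  fix l assume s: "saturated P c" and "l \<in> set (word lam c)"
  then obtain j where j: "j < length c - 1" "l = word lam c ! j" by (auto simp: in_set_conv_nth)
  then have "Suc j < length c" by simp
  then have l: "l = lam (c!j) (c!Suc j)" and m: "c ! j \<in> P \<and> c ! Suc j \<in> P"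
    using j word_nth sat_in[OF s] by auto
  show "l \<in> (\<lambda>(a, b). lam a b) ` (P \<times> P)"
    by (rule image_eqI[where x="(c!j, c!Suc j)"]) (use l m in auto)
qed

lemma ascent_free_af: "ascent_free lam c \<longleftrightarrow> af (word lam c)"
  unfolding af_iff ascent_free_def ascent_at_def
proof (intro iffI allI impI)
  fix j assume h: "\<forall>i. \<not> (1 \<le> i \<and> i + 1 < length c \<and> lam (c ! (i - 1)) (c ! i) < lam (c ! i) (c ! (i + 1)))"
    and j: "Suc j < length (word lam c)"
  then show "\<not> word lam c ! j < word lam c ! Suc j"
    using h[rule_format, of "Suc j"] by (simp add: word_nth)
next
  fix i assume h: "\<forall>j. Suc j < length (word lam c) \<longrightarrow> \<not> word lam c ! j < word lam c ! Suc j"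
  show "\<not> (1 \<le> i \<and> i + 1 < length c \<and> lam (c ! (i - 1)) (c ! i) < lam (c ! i) (c ! (i + 1)))"
  proof
    assume a: "1 \<le> i \<and> i + 1 < length c \<and> lam (c ! (i - 1)) (c ! i) < lam (c ! i) (c ! (i + 1))"
    then obtain j where ij: "i = Suc j" by (cases i) auto
    have jj: "Suc (Suc j) < length c" using a ij by simp
    have "\<not> word lam c ! j < word lam c ! Suc j" using h jj by simp
    then show False using a ij jj by (simp add: word_nth)
  qed
qed

definition swc where
  "swc P lam a b e x' \<longleftrightarrow> covers P a x' \<and> covers P x' e \<and> lam a x' = lam b e \<and> lam x' e = lam a b"

lemma switch_ex1:
  assumes ER: "ER_labeling P lam" and R: "rank_two_switching P z lam" and B: "is_bottom P z"
    and ab: "covers P a b" and be: "covers P b e" and lt: "lam a b < lam b e"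
  shows "\<exists>!x'. swc P lam a b e x'"
proof -
  have aP: "a \<in> P" using ab by (simp add: covers_def)
  have za: "z \<le> a" and zP: "z \<in> P" using B aP by (auto simp: is_bottom_def)
  from ER zP aP za obtain d where d: "maxchain P z a d" unfolding ER_labeling_def by blast
  define c' where "c' = d @ [b, e]"
  have dne: "d \<noteq> []" using d by (simp add: maxchain_def saturated_def)
  have sat: "saturated P c'"
    unfolding saturated_def c'_def
  proof (intro conjI allI impI)
    show "d @ [b,e] \<noteq> []" by simp
    fix i assume i: "Suc i < length (d @ [b,e])"
    consider "Suc i < length d" | "Suc i = length d" | "i = length d" using i by force
    then show "covers P ((d @ [b,e]) ! i) ((d @ [b,e]) ! Suc i)"
    proof cases
      case 1 then show ?thesis using d by (simp add: maxchain_def saturated_def nth_append)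
    next
      case 2
      then have "d ! i = last d" using last_conv_nth dne by (metis diff_Suc_1)
      then show ?thesis using 2 d ab by (simp add: maxchain_def nth_append)
    next
      case 3 then show ?thesis using be by (simp add: nth_append)
    qed
  qed
  have hd: "hd c' = z" using d dne by (simp add: c'_def maxchain_def)
  have e1: "c' ! (length d - 1) = a" using d dne
    by (simp add: c'_def nth_append maxchain_def last_conv_nth)
  have e2: "c' ! length d = b" by (simp add: c'_def)
  have e3: "c' ! (length d + 1) = e" by (simp add: c'_def nth_append)
  have asc: "ascent_at lam c' (length d)" unfolding ascent_at_def e1 e2 e3
    using dne lt by (simp add: c'_def Suc_le_eq)
  have eq: "\<And>x'. switch_cond P lam c' (length d) x' \<longleftrightarrow> swc P lam a b e x'"
    unfolding switch_cond_def swc_def e1 e2 e3 by simp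
  from R sat hd asc have "\<exists>!x'. switch_cond P lam c' (length d) x'"
    unfolding rank_two_switching_def by blast
  then show ?thesis using eq by simp
qed

lemma U_asc:
  assumes ER: "ER_labeling P lam" and R: "rank_two_switching P z lam" and B: "is_bottom P z"
    and sat: "saturated P c" and asc: "ascent_at lam c i"
  shows "\<exists>x'. swc P lam (c!(i-1)) (c!i) (c!(i+1)) x' \<and> U P lam i c = c[i := x']"
proof -
  have i: "1 \<le> i" "i + 1 < length c" and lt: "lam (c ! (i - 1)) (c ! i) < lam (c ! i) (c ! (i + 1))"
    using asc by (auto simp: ascent_at_def)
  have c1: "covers P (c!(i-1)) (c!i)" using sat_cov[OF sat, of "i-1"] i by simp
  have c2: "covers P (c!i) (c!(i+1))" using sat_cov[OF sat, of i] i by simp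
  have ex: "\<exists>!x'. swc P lam (c!(i-1)) (c!i) (c!(i+1)) x'"
    by (rule switch_ex1[OF ER R B c1 c2 lt])
  have eq: "switch_cond P lam c i = swc P lam (c!(i-1)) (c!i) (c!(i+1))"
    by (auto simp: switch_cond_def swc_def)
  show ?thesis using theI'[OF ex] asc unfolding U_def eq by auto
qed

lemma upd_sat:
  assumes sat: "saturated P c" and sw: "swc P lam (c!(i-1)) (c!i) (c!(i+1)) x'"
    and i: "1 \<le> i" "i + 1 < length c"
  shows "saturated P (c[i := x'])"
  unfolding saturated_def
proof (intro conjI allI impI)
  show "c[i := x'] \<noteq> []" using i by auto
  fix k assume k: "Suc k < length (c[i := x'])"
  consider "Suc k = i" | "k = i" | "Suc k \<noteq> i \<and> k \<noteq> i" by blast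
  then show "covers P (c[i := x'] ! k) (c[i := x'] ! Suc k)"
  proof cases
    case 1 then show ?thesis using sw i by (auto simp: swc_def)
  next
    case 2 then show ?thesis using sw i by (auto simp: swc_def)
  next
    case 3 then show ?thesis using sat k by (simp add: saturated_def)
  qed
qed

lemma upd_word:
  assumes sw: "swc P lam (c!(i-1)) (c!i) (c!(i+1)) x'"
    and i: "1 \<le> i" "i + 1 < length c"
  shows "word lam (c[i := x']) = (word lam c)[i-1 := word lam c ! i, i := word lam c ! (i-1)]"
proof (rule nth_equalityI)
  show "length (word lam (c[i := x'])) = length ((word lam c)[i-1 := word lam c ! i, i := word lam c ! (i-1)])"
    by simp
  fix j assume j: "j < length (word lam (c[i := x']))"
  then have j': "Suc j < length c" by simp
  consider "Suc j = i" | "j = i" | "Suc j \<noteq> i \<and> j \<noteq> i" by blast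
  then show "word lam (c[i := x']) ! j = (word lam c)[i-1 := word lam c ! i, i := word lam c ! (i-1)] ! j"
  proof cases
    case 1 then show ?thesis using sw i j' by (auto simp: swc_def word_nth)
  next
    case 2 then show ?thesis using sw i j' by (auto simp: swc_def word_nth)
  next
    case 3 then show ?thesis using j' i by (auto simp: word_nth nth_list_update)
  qed
qed

lemma upd2: "(p @ x # y # q)[length p := a, Suc (length p) := b] = p @ a # b # q"
  by (simp add: list_update_append)

lemma swap_decomp1: "Suc j < length u \<Longrightarrow> u = take j u @ u!j # u!Suc j # drop (Suc (Suc j)) u"
  by (simp add: Cons_nth_drop_Suc)

lemma swap_decomp2: "Suc j < length u \<Longrightarrow>
   u[j := u!Suc j, Suc j := u!j] = take j u @ u!Suc j # u!j # drop (Suc (Suc j)) u"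
proof -
  assume a: "Suc j < length u"
  define p where "p = take j u"
  define x where "x = u ! j"
  define y where "y = u ! Suc j"
  define q where "q = drop (Suc (Suc j)) u"
  have eq: "u = p @ x # y # q" using swap_decomp1[OF a] unfolding p_def x_def y_def q_def .
  have L: "length p = j" using a unfolding p_def by simp
  have "u[length p := y, Suc (length p) := x] = p @ y # x # q"
    by (subst eq) (rule upd2)
  then have "u[j := y, Suc j := x] = p @ y # x # q" by (simp only: L)
  then show ?thesis by (simp only: p_def x_def y_def q_def)
qed



lemma U_step:
  assumes ER: "ER_labeling P lam" and R: "rank_two_switching P z lam" and B: "is_bottom P z"
    and m: "maxchain P x y c" and asc: "ascent_at lam c i"
  shows "maxchain P x y (U P lam i c) \<and> swf (word lam c) (word lam (U P lam i c))"
proof -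
  have sat: "saturated P c" using m by (simp add: maxchain_def)
  obtain x' where sw: "swc P lam (c!(i-1)) (c!i) (c!(i+1)) x'" and U: "U P lam i c = c[i := x']"
    using U_asc[OF ER R B sat asc] by blast
  have i: "1 \<le> i" "i + 1 < length c" and lt: "lam (c ! (i - 1)) (c ! i) < lam (c ! i) (c ! (i + 1))"
    using asc by (auto simp: ascent_at_def)
  have sat2: "saturated P (c[i := x'])" by (rule upd_sat[OF sat sw i])
  have ne: "c \<noteq> []" using i by auto
  have hd: "hd (c[i := x']) = hd c" using ne i by (simp add: hd_conv_nth)
  have lst: "last (c[i := x']) = last c" using ne i by (simp add: last_conv_nth)
  have m2: "maxchain P x y (c[i := x'])" using m sat2 hd lst by (simp add: maxchain_def)
  define w where "w = word lam c"
  define j where "j = i - 1"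
  have ij: "i = Suc j" using i j_def by simp
  have jw: "Suc j < length w" using i ij w_def by simp
  have ww: "word lam (c[i := x']) = w[j := w ! Suc j, Suc j := w ! j]"
    using upd_word[OF sw i] unfolding w_def ij by simp
  have ltw: "w ! j < w ! Suc j" using lt ij i unfolding w_def by (simp add: word_nth)
  have "swf w (w[j := w ! Suc j, Suc j := w ! j])"
    unfolding swf_def
    using swap_decomp1[OF jw] swap_decomp2[OF jw] ltw by blast
  then show ?thesis using m2 U ww w_def by simp
qed

lemma af_exists:
  assumes ER: "ER_labeling P lam" and R: "rank_two_switching P z lam" and B: "is_bottom P z"
    and fin: "finite P" and m: "maxchain P x y c"
  shows "\<exists>d. (qstep P lam x y)\<^sup>*\<^sup>* c d \<and> ascent_free lam d \<and> maxchain P x y d"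
proof -
  define L where "L = (\<lambda>(a, b). lam a b) ` (P \<times> P)"
  have finL: "finite L" unfolding L_def using fin by simp
  show ?thesis using m
  proof (induction "wm (hL L) (word lam c)" arbitrary: c rule: less_induct)
    case less
    show ?case
    proof (cases "ascent_free lam c")
      case True then show ?thesis using less.prems by blast
    next
      case False
      then obtain i where asc: "ascent_at lam c i" by (auto simp: ascent_free_def)
      from U_step[OF ER R B less.prems asc]
      have m2: "maxchain P x y (U P lam i c)" and s: "swf (word lam c) (word lam (U P lam i c))"
        by auto
      have "saturated P c" using less.prems by (simp add: maxchain_def)
      then have "set (word lam c) \<subseteq> L" unfolding L_def by (rule word_set)
      then have lt: "wm (hL L) (word lam (U P lam i c)) < wm (hL L) (word lam c)"
        using swf_wm[OF s _ finL] by blast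
      from less.hyps[OF lt m2] obtain d where
        d: "(qstep P lam x y)\<^sup>*\<^sup>* (U P lam i c) d" "ascent_free lam d" "maxchain P x y d" by blast
      have "qstep P lam x y c (U P lam i c)" unfolding qstep_def using less.prems m2 by blast
      then show ?thesis using d by (meson converse_rtranclp_into_rtranclp)
    qed
  qed
qed

lemma qstep_weq:
  assumes ER: "ER_labeling P lam" and R: "rank_two_switching P z lam" and B: "is_bottom P z"
    and q: "qstep P lam x y c d"
  shows "sw\<^sup>*\<^sup>* (word lam c) (word lam d)"
proof -
  from q obtain i where m: "maxchain P x y c" and d: "d = U P lam i c" by (auto simp: qstep_def)
  show ?thesis
  proof (cases "ascent_at lam c i")
    case True
    then have "swf (word lam c) (word lam d)" using U_step[OF ER R B m] d by blast
    then show ?thesis by (simp add: sw_def r_into_rtranclp)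
  next
    case False then show ?thesis using d by (simp add: U_def)
  qed
qed

lemma symcl_weq:
  assumes ER: "ER_labeling P lam" and R: "rank_two_switching P z lam" and B: "is_bottom P z"
    and q: "(symclp (qstep P lam x y))\<^sup>*\<^sup>* c d"
  shows "sw\<^sup>*\<^sup>* (word lam c) (word lam d)"
  using q
proof (induction rule: rtranclp_induct)
  case base then show ?case by simp
next
  case (step b e)
  from step.hyps(2) have "sw\<^sup>*\<^sup>* (word lam b) (word lam e)"
  proof (cases rule: symclpE)
    case base then show ?thesis using qstep_weq[OF ER R B] by blast
  next
    case sym then show ?thesis using qstep_weq[OF ER R B] weq_sym by blast
  qed
  then show ?case using step.IH by (rule rtranclp_trans[rotated])
qed

lemma symcl_sym: "(symclp r)\<^sup>*\<^sup>* a b \<Longrightarrow> (symclp r)\<^sup>*\<^sup>* b a"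
proof (induction rule: rtranclp_induct)
  case base then show ?case by simp
next
  case (step b c)
  from step.hyps(2) have "symclp r c b" by (cases rule: symclpE) auto
  then show ?case using step.IH by (meson converse_rtranclp_into_rtranclp)
qed

lemma qequiv_from_weq:
  assumes ER: "ER_labeling P lam" and R: "rank_two_switching P z lam" and B: "is_bottom P z"
    and fin: "finite P"
    and H6: "\<forall>x\<in>P. \<forall>y\<in>P. \<forall>c1 c2. x \<le> y \<and> maxchain P x y c1 \<and> maxchain P x y c2 \<and>
           ascent_free lam c1 \<and> ascent_free lam c2 \<and> c1 \<noteq> c2 \<longrightarrow> word lam c1 \<noteq> word lam c2"
    and m1: "maxchain P x y c1" and m2: "maxchain P x y c2" and xP: "x \<in> P" and yP: "y \<in> P"
    and w: "sw\<^sup>*\<^sup>* (word lam c1) (word lam c2)"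
  shows "qequiv P lam x y c1 c2"
proof -
  obtain d1 where d1: "(qstep P lam x y)\<^sup>*\<^sup>* c1 d1" "ascent_free lam d1" "maxchain P x y d1"
    using af_exists[OF ER R B fin m1] by blast
  obtain d2 where d2: "(qstep P lam x y)\<^sup>*\<^sup>* c2 d2" "ascent_free lam d2" "maxchain P x y d2"
    using af_exists[OF ER R B fin m2] by blast
  have mono: "(qstep P lam x y)\<^sup>*\<^sup>* \<le> (symclp (qstep P lam x y))\<^sup>*\<^sup>*"
    by (rule rtranclp_mono) (rule symclp_greater)
  have s1: "(symclp (qstep P lam x y))\<^sup>*\<^sup>* c1 d1" using d1(1) mono by blast
  have s2: "(symclp (qstep P lam x y))\<^sup>*\<^sup>* c2 d2" using d2(1) mono by blast
  have "sw\<^sup>*\<^sup>* (word lam d1) (word lam c1)" using symcl_weq[OF ER R B s1] weq_sym by blast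
  also have "sw\<^sup>*\<^sup>* (word lam c1) (word lam c2)" by (rule w)
  also have "sw\<^sup>*\<^sup>* (word lam c2) (word lam d2)" using symcl_weq[OF ER R B s2] .
  finally have "word lam d1 = word lam d2"
    using nf_unique d1(2) d2(2) by (simp add: ascent_free_af)
  moreover have "x \<le> y" using m1 by (rule maxchain_le)
  ultimately have "d1 = d2" using H6 xP yP d1 d2 by blast
  then have "(symclp (qstep P lam x y))\<^sup>*\<^sup>* c1 c2" using s1 symcl_sym[OF s2] by simp
  then show ?thesis using m1 m2 by (simp add: qequiv_def)
qed

lemma U_lab:
  assumes ER: "ER_labeling P lam" and R: "rank_two_switching P z lam" and B: "is_bottom P z"
    and sat: "saturated P c" and i: "1 \<le> i" "i + 1 < length c"
    and lt: "lam (c!(i-1)) (c!i) < lam (c!i) (c!(i+1))"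
  obtains x' where "U P lam i c = c[i:=x']" "saturated P (c[i:=x'])"
    "lam (c!(i-1)) x' = lam (c!i) (c!(i+1))" "lam x' (c!(i+1)) = lam (c!(i-1)) (c!i)"
proof -
  have asc: "ascent_at lam c i" using i lt by (simp add: ascent_at_def)
  obtain x' where sw: "swc P lam (c!(i-1)) (c!i) (c!(i+1)) x'" and U: "U P lam i c = c[i := x']"
    using U_asc[OF ER R B sat asc] by blast
  show ?thesis using that[OF U upd_sat[OF sat sw i]] sw by (simp add: swc_def)
qed

lemma sat4: "covers P a b \<Longrightarrow> covers P b e \<Longrightarrow> covers P e f \<Longrightarrow> saturated P [a,b,e,f]"
  unfolding saturated_def
proof (intro conjI allI impI)
  fix k assume "covers P a b" "covers P b e" "covers P e f" "Suc k < length [a,b,e,f]"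
  moreover have "k = 0 \<or> k = 1 \<or> k = 2" using \<open>Suc k < length [a,b,e,f]\<close> by auto
  ultimately show "covers P ([a,b,e,f] ! k) ([a,b,e,f] ! Suc k)" by auto
qed simp

lemma af4: "\<not> lam a b < lam b e \<Longrightarrow> \<not> lam b e < lam e f \<Longrightarrow> ascent_free lam [a,b,e,f]"
  by (simp add: ascent_free_af)



theorem theorem3p22:
  fixes P :: "'a::order set" and z :: 'a and lam :: "'a \<Rightarrow> 'a \<Rightarrow> 'l::order"
  assumes "finite P"
    and "graded P"
    and "is_bottom P z"
    and "ER_labeling P lam"
    and "rank_two_switching P z lam"
    and "\<forall>x\<in>P. \<forall>y\<in>P. \<forall>c1 c2. x \<le> y \<and> maxchain P x y c1 \<and> maxchain P x y c2 \<and>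
           ascent_free lam c1 \<and> ascent_free lam c2 \<and> c1 \<noteq> c2 \<longrightarrow> word lam c1 \<noteq> word lam c2"
  shows "rank_two_switching P z lam \<and> braid_relation P lam \<and> cancellative P lam"
proof -
  note fin = assms(1) and B = assms(3) and ER = assms(4) and R = assms(5) and H6 = assms(6)
  have braid: "braid_relation P lam"
    unfolding braid_relation_def
  proof (intro allI impI)
    fix x y c i
    assume h: "maxchain P x y c \<and> 1 \<le> i \<and> i + 3 \<le> length c \<and>
        lam (c ! (i - 1)) (c ! i) < lam (c ! i) (c ! (i + 1)) \<and>
        lam (c ! i) (c ! (i + 1)) < lam (c ! (i + 1)) (c ! (i + 2))"
    then have sat: "saturated P c" and i1: "1 \<le> i" and i3: "i + 3 \<le> length c"
      and AB: "lam (c ! (i - 1)) (c ! i) < lam (c ! i) (c ! (i + 1))"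
      and BC: "lam (c ! i) (c ! (i + 1)) < lam (c ! (i + 1)) (c ! (i + 2))"
      by (auto simp: maxchain_def)
    define A where "A = lam (c ! (i - 1)) (c ! i)"
    define Bl where "Bl = lam (c ! i) (c ! (i + 1))"
    define C where "C = lam (c ! (i + 1)) (c ! (i + 2))"
    have AB': "A < Bl" and BC': "Bl < C" using AB BC by (simp_all add: A_def Bl_def C_def)
    have AC: "A < C" using AB' BC' by (rule less_trans)
    have ii: "i - 1 \<noteq> i" "i - 1 \<noteq> i + 1" "i - 1 \<noteq> i + 2" "Suc (i - 1) = i" using i1 by auto
    
    obtain x1 where L1: "U P lam i c = c[i:=x1]" "saturated P (c[i:=x1])"
      "lam (c!(i-1)) x1 = Bl" "lam x1 (c!(i+1)) = A"
      using U_lab[OF ER R B sat i1 _ AB] i3 unfolding A_def Bl_def by auto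
    define c1 where "c1 = c[i:=x1]"
    have c1n: "c1 ! i = x1" "c1 ! (i+1) = c ! (i+1)" "c1 ! (i+2) = c ! (i+2)" "c1 ! (i-1) = c ! (i-1)"
      "length c1 = length c"
      using i3 ii unfolding c1_def by auto
    obtain x2 where L2: "U P lam (i+1) c1 = c1[i+1:=x2]" "saturated P (c1[i+1:=x2])"
      "lam x1 x2 = C" "lam x2 (c!(i+2)) = A"
      using U_lab[OF ER R B L1(2)[folded c1_def], of "i+1"] i3 c1n L1(4) AC unfolding C_def
      by (auto simp: add.commute)
    define c2 where "c2 = c1[i+1:=x2]"
    have c2n: "c2 ! i = x1" "c2 ! (i+1) = x2" "c2 ! (i+2) = c ! (i+2)" "c2 ! (i-1) = c ! (i-1)"
      "length c2 = length c"
      using i3 ii c1n unfolding c2_def by auto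
    obtain x3 where L3: "U P lam i c2 = c2[i:=x3]" "saturated P (c2[i:=x3])"
      "lam (c!(i-1)) x3 = C" "lam x3 x2 = Bl"
      using U_lab[OF ER R B L2(2)[folded c2_def] i1] i3 c2n L1(3) L2(3) BC' by auto
    
    obtain y1 where R1: "U P lam (i+1) c = c[i+1:=y1]" "saturated P (c[i+1:=y1])"
      "lam (c!i) y1 = C" "lam y1 (c!(i+2)) = Bl"
      using U_lab[OF ER R B sat, of "i+1"] i3 BC unfolding Bl_def C_def
      by (auto simp: add.commute)
    define d1 where "d1 = c[i+1:=y1]"
    have d1n: "d1 ! i = c ! i" "d1 ! (i+1) = y1" "d1 ! (i+2) = c ! (i+2)" "d1 ! (i-1) = c ! (i-1)"
      "length d1 = length c"
      using i3 ii unfolding d1_def by auto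
    obtain y2 where R2: "U P lam i d1 = d1[i:=y2]" "saturated P (d1[i:=y2])"
      "lam (c!(i-1)) y2 = C" "lam y2 y1 = A"
      using U_lab[OF ER R B R1(2)[folded d1_def] i1] i3 d1n R1(3) AC unfolding A_def by auto
    define d2 where "d2 = d1[i:=y2]"
    have d2n: "d2 ! i = y2" "d2 ! (i+1) = y1" "d2 ! (i+2) = c ! (i+2)" "d2 ! (i-1) = c ! (i-1)"
      "length d2 = length c"
      using i3 ii d1n unfolding d2_def by auto
    obtain y3 where R3: "U P lam (i+1) d2 = d2[i+1:=y3]" "saturated P (d2[i+1:=y3])"
      "lam y2 y3 = Bl" "lam y3 (c!(i+2)) = A"
      using U_lab[OF ER R B R2(2)[folded d2_def], of "i+1"] i3 d2n R2(4) R1(4) AB'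
      by (auto simp: add.commute)
    define Lc where "Lc = c2[i:=x3]"
    define Rc where "Rc = d2[i+1:=y3]"
    have Ln: "Lc ! (i-1) = c ! (i-1)" "Lc ! i = x3" "Lc ! (i+1) = x2" "Lc ! (i+2) = c ! (i+2)"
      using i3 ii c2n unfolding Lc_def by auto
    have Rn: "Rc ! (i-1) = c ! (i-1)" "Rc ! i = y2" "Rc ! (i+1) = y3" "Rc ! (i+2) = c ! (i+2)"
      using i3 ii d2n unfolding Rc_def by auto
    have Lsat: "saturated P Lc" using L3(2) unfolding Lc_def .
    have Rsat: "saturated P Rc" using R3(2) unfolding Rc_def .
    have lenL: "length Lc = length c" using c2n unfolding Lc_def by simp
    have lenR: "length Rc = length c" using d2n unfolding Rc_def by simp
    have covL: "covers P (Lc!k) (Lc!Suc k)" if "k \<in> {i-1, i, i+1}" for k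
      using sat_cov[OF Lsat, of k] that i3 lenL by auto
    have covR: "covers P (Rc!k) (Rc!Suc k)" if "k \<in> {i-1, i, i+1}" for k
      using sat_cov[OF Rsat, of k] that i3 lenR by auto
    have sL: "saturated P [c!(i-1), x3, x2, c!(i+2)]"
      using covL[of "i-1"] covL[of i] covL[of "i+1"] Ln ii by (intro sat4) auto
    have sR: "saturated P [c!(i-1), y2, y3, c!(i+2)]"
      using covR[of "i-1"] covR[of i] covR[of "i+1"] Rn ii by (intro sat4) auto
    have mL: "maxchain P (c!(i-1)) (c!(i+2)) [c!(i-1), x3, x2, c!(i+2)]"
      using sL by (simp add: maxchain_def)
    have mR: "maxchain P (c!(i-1)) (c!(i+2)) [c!(i-1), y2, y3, c!(i+2)]"
      using sR by (simp add: maxchain_def)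
    have nCB: "\<not> C < Bl" and nBA: "\<not> Bl < A" using AB' BC' by auto
    have afL: "ascent_free lam [c!(i-1), x3, x2, c!(i+2)]"
      using L3(3) L3(4) L2(4) nCB nBA by (intro af4) auto
    have afR: "ascent_free lam [c!(i-1), y2, y3, c!(i+2)]"
      using R2(3) R3(3) R3(4) nCB nBA by (intro af4) auto
    have wEq: "word lam [c!(i-1), x3, x2, c!(i+2)] = word lam [c!(i-1), y2, y3, c!(i+2)]"
      using L3(3) L3(4) L2(4) R2(3) R3(3) R3(4) by simp
    have P1: "c!(i-1) \<in> P" using sat_in[OF sat, of "i-1"] i3 ii by simp
    have P2: "c!(i+2) \<in> P" using sat_in[OF sat, of "i+1"] i3 by simp
    have le: "c!(i-1) \<le> c!(i+2)" using mL by (rule maxchain_le)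
    have "[c!(i-1), x3, x2, c!(i+2)] = [c!(i-1), y2, y3, c!(i+2)]"
      using H6 P1 P2 le mL mR afL afR wEq by blast
    then have xy: "x3 = y2" "x2 = y3" by auto
    have "Lc = Rc"
    proof (rule nth_equalityI)
      show "length Lc = length Rc" using lenL lenR by simp
      fix k assume k: "k < length Lc"
      show "Lc ! k = Rc ! k"
      proof (cases "k = i \<or> k = i + 1")
        case True then show ?thesis using Ln Rn xy by auto
      next
        case False then show ?thesis
          unfolding Lc_def Rc_def c2_def c1_def d2_def d1_def by simp
      qed
    qed
    then show "U P lam i (U P lam (i + 1) (U P lam i c)) = U P lam (i + 1) (U P lam i (U P lam (i + 1) c))"
      using L1(1) L2(1) L3(1) R1(1) R2(1) R3(1)
      unfolding Lc_def Rc_def c2_def c1_def d2_def d1_def by simp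
  qed
  have canc: "cancellative P lam"
    unfolding cancellative_def
  proof (intro ballI allI impI)
    fix z' x y c c1 c2
    assume xP: "x \<in> P" and yP: "y \<in> P"
    assume h: "z' < x \<and> x < y \<and> maxchain P z' x c \<and> maxchain P x y c1 \<and> maxchain P x y c2 \<and>
        qequiv P lam z' y (c @ tl c1) (c @ tl c2)"
    then have m: "maxchain P z' x c" and m1: "maxchain P x y c1" and m2: "maxchain P x y c2"
      and q: "(symclp (qstep P lam z' y))\<^sup>*\<^sup>* (c @ tl c1) (c @ tl c2)"
      by (auto simp: qequiv_def)
    have ne: "c \<noteq> []" "c1 \<noteq> []" "c2 \<noteq> []" using m m1 m2 by (auto simp: maxchain_def saturated_def)
    have lc: "last c = hd c1" "last c = hd c2" using m m1 m2 by (auto simp: maxchain_def)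
    have "sw\<^sup>*\<^sup>* (word lam (c @ tl c1)) (word lam (c @ tl c2))"
      by (rule symcl_weq[OF ER R B q])
    then have "sw\<^sup>*\<^sup>* (word lam c @ word lam c1) (word lam c @ word lam c2)"
      using word_append[OF ne(1) lc(1) ne(2), of lam] word_append[OF ne(1) lc(2) ne(3), of lam] by simp
    then have "sw\<^sup>*\<^sup>* (word lam c1) (word lam c2)" by (rule weq_cancel)
    then show "qequiv P lam x y c1 c2"
      by (rule qequiv_from_weq[OF ER R B fin H6 m1 m2 xP yP])
  qed
  show ?thesis using R braid canc by simp
qed

end
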